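(* Suppose $\gamma\ge\sqrt{8M}$ and $U:\mathbb R^d\to\mathbb R$ is twice continuously differentiable with $M$-Lipschitz gradient and $m$-strongly convex, with minimizer $x^*$; let $z^*=(x^*,0_d)$, $\lambda=\min(\frac14,\frac m{\gamma^2})$ and \[\mathcal V(x,v)=U(x)-U(x^* )+\frac14\gamma^2\big(\|x-x^*+\gamma^{-1}v\|^2+\|\gamma^{-1}v\|^2-\lambda\|x-x^*\|^2\big).\] Then for every $z=(x,v)\in\mathbb R^{2d}$, $\mathcal V(x,v)\ge0$ and \[\mathcal V^{1/2}(x,v)\ge\frac18(\gamma\|x-x^*\|+\|v\|)\ge\frac{\sqrt M}8\|z-z^*\|_{a,b}.\] Moreover, $\mathcal V^{1/2}$ is $8\gamma$-Lipschitz with respect to $\|\cdot\|_{a,b}$.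
   Context: $a=1/M$, $b=1/\gamma$, and $\|z\|_{a,b}^2=\|x\|^2+2b\langle x,v\rangle+a\|v\|^2$ for $z=(x,v)\in\mathbb R^{2d}$. *)

theory Defs
  imports "HOL-Analysis.Analysis"
begin

definition strongly_convex :: "real \<Rightarrow> ('a::real_inner \<Rightarrow> real) \<Rightarrow> bool" where
  "strongly_convex m U \<longleftrightarrow>
     (\<forall>x y. \<forall>t\<in>{0..1}. U ((1 - t) *\<^sub>R x + t *\<^sub>R y)
        \<le> (1 - t) * U x + t * U y - m / 2 * t * (1 - t) * (norm (x - y))\<^sup>2)"

definition C2_with_gradient :: "('a::euclidean_space \<Rightarrow> real) \<Rightarrow> ('a \<Rightarrow> 'a) \<Rightarrow> bool" where
  "C2_with_gradient U G \<longleftrightarrow>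
     (\<forall>x. (U has_derivative (\<lambda>h. G x \<bullet> h)) (at x)) \<and>
     (\<exists>H :: 'a \<Rightarrow> ('a \<Rightarrow>\<^sub>L 'a). (\<forall>x. (G has_derivative blinfun_apply (H x)) (at x))
          \<and> continuous_on UNIV H)"

definition abnorm :: "real \<Rightarrow> real \<Rightarrow> 'a::real_inner \<Rightarrow> 'a \<Rightarrow> real" where
  "abnorm a b x v = sqrt ((norm x)\<^sup>2 + 2 * b * (x \<bullet> v) + a * (norm v)\<^sup>2)"

definition lyapV :: "('a::real_inner \<Rightarrow> real) \<Rightarrow> real \<Rightarrow> real \<Rightarrow> 'a \<Rightarrow> 'a \<Rightarrow> 'a \<Rightarrow> real" where
  "lyapV U \<gamma> lam xs x v = U x - U xs + 1/4 * \<gamma>\<^sup>2 *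
     ((norm (x - xs + v /\<^sub>R \<gamma>))\<^sup>2 + (norm (v /\<^sub>R \<gamma>))\<^sup>2 - lam * (norm (x - xs))\<^sup>2)"

end

theory Submission
  imports Defs
begin

lemma sqrt_sum_lip:
  fixes a b a' b' :: real
  assumes "a \<ge> 0" "b \<ge> 0" "a' \<ge> 0" "b' \<ge> 0"
  shows "\<bar>sqrt (a + b) - sqrt (a' + b')\<bar> \<le> \<bar>sqrt a - sqrt a'\<bar> + \<bar>sqrt b - sqrt b'\<bar>"
proof -
  have n1: "norm (sqrt a, sqrt b) = sqrt (a + b)" using assms by (simp add: norm_Pair)
  have n2: "norm (sqrt a', sqrt b') = sqrt (a' + b')" using assms by (simp add: norm_Pair)
  have "\<bar>norm (sqrt a, sqrt b) - norm (sqrt a', sqrt b')\<bar> \<le> norm ((sqrt a, sqrt b) - (sqrt a', sqrt b'))"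
    by (rule norm_triangle_ineq3)
  also have "\<dots> = norm (sqrt a - sqrt a', sqrt b - sqrt b')" by simp
  also have "\<dots> \<le> norm (sqrt a - sqrt a') + norm (sqrt b - sqrt b')" by (rule norm_Pair_le)
  finally show ?thesis using n1 n2 by simp
qed

lemma descent:
  fixes U :: "'a::real_inner \<Rightarrow> real"
  assumes der: "\<forall>x. (U has_derivative (\<lambda>h. G x \<bullet> h)) (at x)"
    and lip: "M-lipschitz_on UNIV G"
  shows "U (x + d) \<le> U x + G x \<bullet> d + M / 2 * (norm d)\<^sup>2"
proof -
  define g where "g t = U (x + t *\<^sub>R d) - t * (G x \<bullet> d) - M / 2 * t\<^sup>2 * (norm d)\<^sup>2" for t
  have dU: "((\<lambda>t. U (x + t *\<^sub>R d)) has_real_derivative (G (x + t *\<^sub>R d) \<bullet> d)) (at t)" for t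
  proof -
    have l: "((\<lambda>t. x + t *\<^sub>R d) has_derivative (\<lambda>s. s *\<^sub>R d)) (at t)"
      by (auto intro!: derivative_eq_intros)
    have "((\<lambda>t. U (x + t *\<^sub>R d)) has_derivative (\<lambda>s. G (x + t *\<^sub>R d) \<bullet> (s *\<^sub>R d))) (at t)"
      using has_derivative_compose[OF l der[rule_format]] by simp
    moreover have "(\<lambda>s. G (x + t *\<^sub>R d) \<bullet> (s *\<^sub>R d)) = (*) (G (x + t *\<^sub>R d) \<bullet> d)"
      by (auto simp: fun_eq_iff)
    ultimately show ?thesis unfolding has_field_derivative_def by simp
  qed
  have dg: "(g has_real_derivative (G (x + t *\<^sub>R d) \<bullet> d - G x \<bullet> d - M * t * (norm d)\<^sup>2)) (at t)" for t
    unfolding g_def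
    by (rule derivative_eq_intros dU | simp)+ 
  have "g 1 \<le> g 0"
  proof (rule DERIV_nonpos_imp_nonincreasing[of 0 1 g])
    fix t :: real assume t: "0 \<le> t" "t \<le> 1"
    have "G (x + t *\<^sub>R d) \<bullet> d - G x \<bullet> d = (G (x + t *\<^sub>R d) - G x) \<bullet> d" by (simp add: inner_diff_left)
    also have "\<dots> \<le> norm (G (x + t *\<^sub>R d) - G x) * norm d" by (rule norm_cauchy_schwarz)
    also have "\<dots> \<le> (M * norm (t *\<^sub>R d)) * norm d"
    proof (rule mult_right_mono)
      show "norm (G (x + t *\<^sub>R d) - G x) \<le> M * norm (t *\<^sub>R d)"
        using lipschitz_onD[OF lip, of "x + t *\<^sub>R d" x] by (simp add: dist_norm)
    qed simp
    also have "\<dots> = M * t * (norm d)\<^sup>2" using t by (simp add: power2_eq_square)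
    finally show "\<exists>y. (g has_real_derivative y) (at t) \<and> y \<le> 0" using dg by force
  qed simp
  then show ?thesis unfolding g_def by simp
qed

lemma grad_bound:
  fixes U :: "'a::real_inner \<Rightarrow> real"
  assumes der: "\<forall>x. (U has_derivative (\<lambda>h. G x \<bullet> h)) (at x)"
    and lip: "M-lipschitz_on UNIV G" and M: "M > 0" and mn: "\<forall>y. U xs \<le> U y"
  shows "(norm (G x))\<^sup>2 \<le> 2 * M * (U x - U xs)"
proof -
  have "U xs \<le> U (x + (- (1/M) *\<^sub>R G x))" using mn by simp
  also have "\<dots> \<le> U x + G x \<bullet> (- (1/M) *\<^sub>R G x) + M / 2 * (norm (- (1/M) *\<^sub>R G x))\<^sup>2"
    by (rule descent[OF der lip])
  also have "\<dots> = U x - (norm (G x))\<^sup>2 / (2 * M)"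
    using M by (simp add: power2_norm_eq_inner[symmetric] power2_eq_square field_simps)
  finally show ?thesis using M by (simp add: field_simps)
qed

lemma sqrt_f_lip1:
  fixes U :: "'a::real_inner \<Rightarrow> real"
  assumes der: "\<forall>x. (U has_derivative (\<lambda>h. G x \<bullet> h)) (at x)"
    and lip: "M-lipschitz_on UNIV G" and M: "M > 0" and mn: "\<forall>y. U xs \<le> U y"
  shows "sqrt (U x' - U xs) \<le> sqrt (U x - U xs) + sqrt (M / 2) * norm (x' - x)"
proof -
  define K where "K = sqrt (M / 2)"
  define s where "s = sqrt (U x - U xs)"
  define d where "d = x' - x"
  have K0: "K \<ge> 0" and K2: "K\<^sup>2 = M / 2" using M by (auto simp: K_def)
  have s0: "s \<ge> 0" and s2: "s\<^sup>2 = U x - U xs" using mn by (auto simp: s_def)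
  have "(norm (G x))\<^sup>2 \<le> (2 * K * s)\<^sup>2"
    proof -
    have "(2 * K * s)\<^sup>2 = 2 * M * (U x - U xs)" by (simp add: power_mult_distrib K2 s2)
    then show ?thesis using grad_bound[OF der lip M mn, of x] by linarith
  qed
  then have gb: "norm (G x) \<le> 2 * K * s"
    using K0 s0 by (meson power2_le_imp_le mult_nonneg_nonneg zero_le_numeral)
  have "U x' = U (x + d)" by (simp add: d_def)
  also have "\<dots> \<le> U x + G x \<bullet> d + M / 2 * (norm d)\<^sup>2" by (rule descent[OF der lip])
  also have "\<dots> \<le> U x + norm (G x) * norm d + M / 2 * (norm d)\<^sup>2"
    using norm_cauchy_schwarz[of "G x" d] by simp
  also have "\<dots> \<le> U x + 2 * K * s * norm d + M / 2 * (norm d)\<^sup>2"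
    using gb by (simp add: mult_right_mono)
  also have "\<dots> = U xs + (s + K * norm d)\<^sup>2"
  proof -
    have e1: "M = 2 * K\<^sup>2" using K2 by simp
    have e2: "U x = U xs + s\<^sup>2" using s2 by simp
    show ?thesis unfolding e1 e2 by (simp add: power2_eq_square algebra_simps)
  qed
  finally have "U x' - U xs \<le> (s + K * norm d)\<^sup>2" by simp
  then have "sqrt (U x' - U xs) \<le> sqrt ((s + K * norm d)\<^sup>2)" by (rule real_sqrt_le_mono)
  also have "\<dots> = s + K * norm d" using s0 K0 by simp
  finally show ?thesis by (simp add: s_def K_def d_def)
qed

lemma sqrt_f_lip:
  fixes U :: "'a::real_inner \<Rightarrow> real"
  assumes der: "\<forall>x. (U has_derivative (\<lambda>h. G x \<bullet> h)) (at x)"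
    and lip: "M-lipschitz_on UNIV G" and M: "M > 0" and mn: "\<forall>y. U xs \<le> U y"
  shows "\<bar>sqrt (U x - U xs) - sqrt (U x' - U xs)\<bar> \<le> sqrt (M / 2) * norm (x - x')"
  using sqrt_f_lip1[OF der lip M mn, of x x'] sqrt_f_lip1[OF der lip M mn, of x' x]
  by (simp add: norm_minus_commute abs_le_iff)

lemma lyap_decomp:
  fixes xs :: "'a::real_inner"
  assumes g: "\<gamma> > 0"
  shows "lyapV U \<gamma> lam xs x v = (U x - U xs) + (norm (v + (\<gamma>/2) *\<^sub>R (x - xs)))\<^sup>2 / 2
     + \<gamma>\<^sup>2 / 4 * (1/2 - lam) * (norm (x - xs))\<^sup>2"
proof -
  define y where "y = x - xs"
  have e1: "(norm (y + v /\<^sub>R \<gamma>))\<^sup>2 = (norm y)\<^sup>2 + 2 * (y \<bullet> v) / \<gamma> + (norm v)\<^sup>2 / \<gamma>\<^sup>2"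
    unfolding power2_norm_eq_inner using g
    by (simp add: inner_add_left inner_add_right inner_commute[of v y] power2_eq_square divide_simps) (simp add: algebra_simps)
  have e2: "(norm (v /\<^sub>R \<gamma>))\<^sup>2 = (norm v)\<^sup>2 / \<gamma>\<^sup>2"
    using g by (simp add: power_mult_distrib power_inverse divide_inverse)
  have e3: "(norm (v + (\<gamma>/2) *\<^sub>R y))\<^sup>2 = (norm v)\<^sup>2 + \<gamma> * (y \<bullet> v) + \<gamma>\<^sup>2/4 * (norm y)\<^sup>2"
    unfolding power2_norm_eq_inner
    by (simp add: inner_add_left inner_add_right inner_commute[of v y] power2_eq_square divide_simps) (simp add: algebra_simps)
  show ?thesis unfolding lyapV_def y_def[symmetric] e1 e2 e3
    using g by (simp add: power2_eq_square field_simps)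
qed

lemma abn_lower:
  fixes y v :: "'a::real_inner"
  assumes g: "\<gamma> > 0" and M: "M > 0" and gm: "8 * M \<le> \<gamma>\<^sup>2"
  shows "\<gamma> * norm y + norm v \<le> 2 * \<gamma> * abnorm (1/M) (1/\<gamma>) y v"
proof -
  define X where "X = (norm y)\<^sup>2 + 2 * (1/\<gamma>) * (y \<bullet> v) + (1/M) * (norm v)\<^sup>2"
  have cs: "- (norm y * norm v) \<le> y \<bullet> v" using norm_cauchy_schwarz[of "-y" v] by simp
  have q: "8 \<le> \<gamma>\<^sup>2 / M" using gm M by (simp add: field_simps)
  have "4 * \<gamma>\<^sup>2 * X = 4 * (\<gamma> * norm y)\<^sup>2 + 8 * \<gamma> * (y \<bullet> v) + 4 * (\<gamma>\<^sup>2 / M) * (norm v)\<^sup>2"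
    using g M by (simp add: X_def field_simps power2_eq_square)
  also have "\<dots> \<ge> 4 * (\<gamma> * norm y)\<^sup>2 - 8 * (\<gamma> * norm y) * norm v + 32 * (norm v)\<^sup>2"
  proof -
    have "8 * \<gamma> * (y \<bullet> v) \<ge> - 8 * (\<gamma> * norm y) * norm v" proof -
      have "\<gamma> * (- (norm y * norm v)) \<le> \<gamma> * (y \<bullet> v)" using mult_left_mono[OF cs, of \<gamma>] g by simp
      then show ?thesis by (simp add: algebra_simps)
    qed
    moreover have "4 * (\<gamma>\<^sup>2 / M) * (norm v)\<^sup>2 \<ge> 32 * (norm v)\<^sup>2"
    proof -
      have "8 * (norm v)\<^sup>2 \<le> (\<gamma>\<^sup>2 / M) * (norm v)\<^sup>2" by (rule mult_right_mono[OF q]) simp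
      then show ?thesis by linarith
    qed
    ultimately show ?thesis by linarith
  qed
  finally have h: "4 * (\<gamma> * norm y)\<^sup>2 - 8 * (\<gamma> * norm y) * norm v + 32 * (norm v)\<^sup>2 \<le> 4 * \<gamma>\<^sup>2 * X" .
  have "(\<gamma> * norm y + norm v)\<^sup>2 \<le> 4 * \<gamma>\<^sup>2 * X"
  proof -
    have "(\<gamma> * norm y + norm v)\<^sup>2 \<le> 4 * (\<gamma> * norm y)\<^sup>2 - 8 * (\<gamma> * norm y) * norm v + 32 * (norm v)\<^sup>2"
    proof -
      have "0 \<le> (3 * (\<gamma> * norm y) - 5 * norm v)\<^sup>2" by simp
      also have "\<dots> = 9 * ((\<gamma> * norm y) * (\<gamma> * norm y)) - 30 * ((\<gamma> * norm y) * norm v) + 25 * (norm v * norm v)"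
        by (simp add: power2_eq_square algebra_simps)
      finally have h: "0 \<le> 9 * ((\<gamma> * norm y) * (\<gamma> * norm y)) - 30 * ((\<gamma> * norm y) * norm v) + 25 * (norm v * norm v)" .
      have lin: "p + 2 * q + r \<le> 4 * p - 8 * q + 32 * r"
        if "0 \<le> 9 * p - 30 * q + 25 * r" "0 \<le> r" for p q r :: real
        using that by (simp add: field_simps)
      have e: "(\<gamma> * norm y + norm v)\<^sup>2 = (\<gamma> * norm y) * (\<gamma> * norm y) + 2 * ((\<gamma> * norm y) * norm v) + norm v * norm v"
        by (simp add: power2_eq_square algebra_simps)
      show ?thesis unfolding e using lin[OF h] by (simp add: power2_eq_square)
    qed
    then show ?thesis using h by linarith
  qed
  then have "\<gamma> * norm y + norm v \<le> sqrt (4 * \<gamma>\<^sup>2 * X)"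
    by (simp add: real_le_rsqrt)
  also have "\<dots> = 2 * \<gamma> * sqrt X" using g by (simp add: real_sqrt_mult)
  finally show ?thesis by (simp add: abnorm_def X_def)
qed

lemma abn_upper:
  fixes y v :: "'a::real_inner"
  assumes g: "\<gamma> > 0" and M: "M > 0" and gm: "8 * M \<le> \<gamma>\<^sup>2"
  shows "sqrt M * abnorm (1/M) (1/\<gamma>) y v \<le> \<gamma> * norm y + norm v"
proof -
  define X where "X = (norm y)\<^sup>2 + 2 * (1/\<gamma>) * (y \<bullet> v) + (1/M) * (norm v)\<^sup>2"
  have cs: "y \<bullet> v \<le> norm y * norm v" using norm_cauchy_schwarz by blast
  have "M * X = M * (norm y)\<^sup>2 + 2 * (M / \<gamma>) * (y \<bullet> v) + (norm v)\<^sup>2"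
    using M g by (simp add: X_def field_simps)
  also have "\<dots> \<le> (\<gamma> * norm y + norm v)\<^sup>2"
  proof -
    have a1: "M * (norm y)\<^sup>2 \<le> \<gamma>\<^sup>2 * (norm y)\<^sup>2" using gm M by (simp add: mult_right_mono)
    have a2: "2 * (M / \<gamma>) \<le> \<gamma>" using gm g M by (simp add: divide_simps power2_eq_square)
    have a3: "2 * (M / \<gamma>) * (y \<bullet> v) \<le> 2 * (M / \<gamma>) * (norm y * norm v)"
      using M g by (intro mult_left_mono[OF cs]) auto
    have a4: "2 * (M / \<gamma>) * (norm y * norm v) \<le> 2 * \<gamma> * (norm y * norm v)"
    proof -
      have "2 * (M / \<gamma>) * (norm y * norm v) \<le> \<gamma> * (norm y * norm v)"
        by (rule mult_right_mono[OF a2]) simp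
      moreover have "0 \<le> \<gamma> * (norm y * norm v)" using g by simp
      ultimately show ?thesis by linarith
    qed
    show ?thesis using a1 a3 a4 by (simp add: power2_eq_square algebra_simps)
  qed
  finally have "sqrt (M * X) \<le> \<gamma> * norm y + norm v"
    using g by (simp add: real_sqrt_le_iff real_le_lsqrt)
  then show ?thesis by (simp add: abnorm_def X_def real_sqrt_mult)
qed

lemma sqrt_scaled:
  fixes c s t :: real
  assumes "c \<ge> 0" "s \<ge> 0" "t \<ge> 0"
  shows "\<bar>sqrt (c * s\<^sup>2) - sqrt (c * t\<^sup>2)\<bar> = sqrt c * \<bar>s - t\<bar>"
  using assms by (simp add: real_sqrt_mult right_diff_distrib[symmetric] abs_mult)

lemma nsq_expand:
  fixes y v :: "'a::real_inner"
  shows "(norm (v + (\<gamma>/2) *\<^sub>R y))\<^sup>2 = (norm v)\<^sup>2 + \<gamma> * (y \<bullet> v) + \<gamma>\<^sup>2/4 * (norm y)\<^sup>2"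
  unfolding power2_norm_eq_inner
  by (simp add: inner_add_left inner_add_right inner_commute[of v y] power2_eq_square divide_simps) (simp add: algebra_simps)

lemma quad_lower:
  fixes A N I lam :: real
  assumes "A \<ge> 0" "N \<ge> 0" "I \<ge> - (A * N)" "lam \<le> 1/4"
  shows "((A + N) / 8)\<^sup>2 \<le> (N\<^sup>2 + I + A\<^sup>2/4) / 2 + A\<^sup>2 / 4 * (1/2 - lam)"
proof -
  have "A\<^sup>2 / 4 * (1/2 - lam) \<ge> A\<^sup>2 / 4 * (1/4)"
    using assms by (intro mult_left_mono) auto
  moreover have "((A + N) / 8)\<^sup>2 \<le> (N\<^sup>2 + I + A\<^sup>2/4) / 2 + A\<^sup>2 / 4 * (1/4)"
  proof -
    have "0 \<le> (11 * A - 17 * N)\<^sup>2" by simp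
    also have "\<dots> = 121 * (A * A) - 374 * (A * N) + 289 * (N * N)" by (simp add: power2_eq_square algebra_simps)
    finally have h: "0 \<le> 121 * (A * A) - 374 * (A * N) + 289 * (N * N)" .
    have h2: "((A + N) / 8)\<^sup>2 = (A * A + 2 * (A * N) + N * N) / 64" by (simp add: power2_eq_square algebra_simps)
    have h3: "N * N \<ge> 0" by simp
    have lin: "(p + 2 * q + r) / 64 \<le> (r + i + p / 4) / 2 + p / 4 * (1 / 4)"
      if "0 \<le> 121 * p - 374 * q + 289 * r" "0 \<le> r" "- q \<le> i" for p q r i :: real
      using that by (simp add: field_simps)
    show ?thesis unfolding h2 unfolding power2_eq_square by (rule lin[OF h h3 assms(3)])
  qed
  ultimately show ?thesis by linarith
qed

theorem lemma9:
  fixes U :: "'a::euclidean_space \<Rightarrow> real" and G :: "'a \<Rightarrow> 'a"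
    and M m \<gamma> :: real and xs :: 'a
  assumes "M > 0" and "m > 0"
    and "\<gamma> \<ge> sqrt (8 * M)"
    and "C2_with_gradient U G"
    and "M-lipschitz_on UNIV G"
    and "strongly_convex m U"
    and "\<forall>y. U xs \<le> U y"
  defines "lam \<equiv> min (1/4) (m / \<gamma>\<^sup>2)"
  defines "a \<equiv> 1 / M" and "b \<equiv> 1 / \<gamma>"
  shows "(\<forall>x v. lyapV U \<gamma> lam xs x v \<ge> 0
            \<and> sqrt (lyapV U \<gamma> lam xs x v) \<ge> 1/8 * (\<gamma> * norm (x - xs) + norm v)
            \<and> 1/8 * (\<gamma> * norm (x - xs) + norm v) \<ge> sqrt M / 8 * abnorm a b (x - xs) v)
         \<and> (\<forall>x v x' v'. \<bar>sqrt (lyapV U \<gamma> lam xs x v) - sqrt (lyapV U \<gamma> lam xs x' v')\<bar>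
            \<le> 8 * \<gamma> * abnorm a b (x - x') (v - v'))"
proof -
  note M = assms(1)
  have s8: "sqrt (8 * M) > 0" using M by simp
  have g: "\<gamma> > 0" using s8 assms(3) by linarith
  have gm: "8 * M \<le> \<gamma>\<^sup>2"
  proof -
    have "(sqrt (8 * M))\<^sup>2 \<le> \<gamma>\<^sup>2" using assms(3) s8 by (intro power_mono) auto
    then show ?thesis using M by simp
  qed
  have der: "\<forall>x. (U has_derivative (\<lambda>h. G x \<bullet> h)) (at x)"
    using assms(4) by (simp add: C2_with_gradient_def)
  note lip = assms(5) and mn = assms(7)
  have lam14: "lam \<le> 1/4" unfolding lam_def by (rule min.cobounded1)
  have lam0: "lam \<ge> 0" using assms(2) g by (simp add: lam_def)
  define c where "c = \<gamma>\<^sup>2 / 4 * (1/2 - lam)"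
  have c0: "c \<ge> 0" using lam14 by (simp add: c_def)
  have cg: "sqrt c \<le> \<gamma>"
  proof -
    have "\<gamma>\<^sup>2 * (1/2 - lam) \<le> \<gamma>\<^sup>2 * 4" using lam0 by (intro mult_left_mono) auto
    then have "c \<le> \<gamma>\<^sup>2" by (simp add: c_def)
    then have "sqrt c \<le> sqrt (\<gamma>\<^sup>2)" by (rule real_sqrt_le_mono)
    then show ?thesis using g by simp
  qed
  have dec: "lyapV U \<gamma> lam xs x v = (U x - U xs) + ((1/2) * (norm (v + (\<gamma>/2) *\<^sub>R (x - xs)))\<^sup>2
      + c * (norm (x - xs))\<^sup>2)" for x v
    using lyap_decomp[OF g, of U lam xs x v] by (simp add: c_def)
  have part1: "lyapV U \<gamma> lam xs x v \<ge> 0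
            \<and> sqrt (lyapV U \<gamma> lam xs x v) \<ge> 1/8 * (\<gamma> * norm (x - xs) + norm v)
            \<and> 1/8 * (\<gamma> * norm (x - xs) + norm v) \<ge> sqrt M / 8 * abnorm a b (x - xs) v" for x v
  proof (intro conjI)
    have f0: "U x - U xs \<ge> 0" using mn by simp
    show "lyapV U \<gamma> lam xs x v \<ge> 0" unfolding dec using f0 c0 by simp
    have q: "((\<gamma> * norm (x - xs) + norm v) / 8)\<^sup>2 \<le>
        ((norm v)\<^sup>2 + \<gamma> * ((x - xs) \<bullet> v) + (\<gamma> * norm (x - xs))\<^sup>2/4) / 2 + (\<gamma> * norm (x - xs))\<^sup>2 / 4 * (1/2 - lam)"
    proof (rule quad_lower)
      show "\<gamma> * ((x - xs) \<bullet> v) \<ge> - (\<gamma> * norm (x - xs) * norm v)"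
      proof -
        have cs: "- (norm (x - xs) * norm v) \<le> (x - xs) \<bullet> v"
          using norm_cauchy_schwarz[of "-(x - xs)" v] by (simp only: inner_minus_left norm_minus_cancel)
        have "\<gamma> * (- (norm (x - xs) * norm v)) \<le> \<gamma> * ((x - xs) \<bullet> v)" using mult_left_mono[OF cs, of \<gamma>] g by simp
        then show ?thesis by (simp add: algebra_simps)
      qed
    qed (use g lam14 in auto)
    have "((\<gamma> * norm (x - xs) + norm v) / 8)\<^sup>2 \<le> lyapV U \<gamma> lam xs x v"
    proof -
      have eR: "c * (norm (x - xs))\<^sup>2 = (\<gamma> * norm (x - xs))\<^sup>2 / 4 * (1/2 - lam)"
        by (simp add: c_def power_mult_distrib)
      have eP: "(\<gamma> * norm (x - xs))\<^sup>2 = \<gamma>\<^sup>2 * (norm (x - xs))\<^sup>2" by (simp add: power_mult_distrib)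
      have e4: "\<gamma>\<^sup>2 / 4 * (norm (x - xs))\<^sup>2 = \<gamma>\<^sup>2 * (norm (x - xs))\<^sup>2 / 4" by simp
      show ?thesis using q f0 unfolding dec nsq_expand eR eP e4 by linarith
    qed
    then show "sqrt (lyapV U \<gamma> lam xs x v) \<ge> 1/8 * (\<gamma> * norm (x - xs) + norm v)"
      using real_le_rsqrt by fastforce
    show "1/8 * (\<gamma> * norm (x - xs) + norm v) \<ge> sqrt M / 8 * abnorm a b (x - xs) v"
      using abn_upper[OF g M gm, of "x - xs" v] unfolding a_def b_def by simp
  qed
  have part2: "\<bar>sqrt (lyapV U \<gamma> lam xs x v) - sqrt (lyapV U \<gamma> lam xs x' v')\<bar>
            \<le> 8 * \<gamma> * abnorm a b (x - x') (v - v')" for x v x' v'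
  proof -
    define n where "n = norm (v + (\<gamma>/2) *\<^sub>R (x - xs))"
    define n' where "n' = norm (v' + (\<gamma>/2) *\<^sub>R (x' - xs))"
    define Y where "Y = norm (x - xs)"
    define Y' where "Y' = norm (x' - xs)"
    have f0: "U x - U xs \<ge> 0" "U x' - U xs \<ge> 0" using mn by auto
    have "\<bar>sqrt (lyapV U \<gamma> lam xs x v) - sqrt (lyapV U \<gamma> lam xs x' v')\<bar>
       \<le> \<bar>sqrt (U x - U xs) - sqrt (U x' - U xs)\<bar>
         + \<bar>sqrt ((1/2) * n\<^sup>2 + c * Y\<^sup>2) - sqrt ((1/2) * n'\<^sup>2 + c * Y'\<^sup>2)\<bar>"
      unfolding dec n_def[symmetric] n'_def[symmetric] Y_def[symmetric] Y'_def[symmetric]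
      by (rule sqrt_sum_lip) (use f0 c0 in auto)
    also have "\<bar>sqrt ((1/2) * n\<^sup>2 + c * Y\<^sup>2) - sqrt ((1/2) * n'\<^sup>2 + c * Y'\<^sup>2)\<bar>
        \<le> \<bar>sqrt ((1/2) * n\<^sup>2) - sqrt ((1/2) * n'\<^sup>2)\<bar> + \<bar>sqrt (c * Y\<^sup>2) - sqrt (c * Y'\<^sup>2)\<bar>"
      by (rule sqrt_sum_lip) (use c0 in auto)
    also have "\<bar>sqrt ((1/2) * n\<^sup>2) - sqrt ((1/2) * n'\<^sup>2)\<bar> = sqrt (1/2) * \<bar>n - n'\<bar>"
      by (rule sqrt_scaled) (auto simp: n_def n'_def)
    also have "\<bar>sqrt (c * Y\<^sup>2) - sqrt (c * Y'\<^sup>2)\<bar> = sqrt c * \<bar>Y - Y'\<bar>"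
      by (rule sqrt_scaled) (auto simp: Y_def Y'_def c0)
    finally have t: "\<bar>sqrt (lyapV U \<gamma> lam xs x v) - sqrt (lyapV U \<gamma> lam xs x' v')\<bar>
       \<le> \<bar>sqrt (U x - U xs) - sqrt (U x' - U xs)\<bar> + (sqrt (1/2) * \<bar>n - n'\<bar> + sqrt c * \<bar>Y - Y'\<bar>)"
      by simp
    have b1: "\<bar>sqrt (U x - U xs) - sqrt (U x' - U xs)\<bar> \<le> \<gamma> * norm (x - x')"
    proof -
      have "sqrt (M / 2) \<le> sqrt (\<gamma>\<^sup>2)" using gm M by (intro real_sqrt_le_mono) simp
      then have "sqrt (M / 2) \<le> \<gamma>" using g by simp
      then have "sqrt (M / 2) * norm (x - x') \<le> \<gamma> * norm (x - x')" by (rule mult_right_mono) simp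
      then show ?thesis using sqrt_f_lip[OF der lip M mn, of x x'] by linarith
    qed
    have b2: "sqrt (1/2) * \<bar>n - n'\<bar> \<le> norm (v - v') + \<gamma> * norm (x - x')"
    proof -
      have "\<bar>n - n'\<bar> \<le> norm ((v + (\<gamma>/2) *\<^sub>R (x - xs)) - (v' + (\<gamma>/2) *\<^sub>R (x' - xs)))"
        unfolding n_def n'_def by (rule norm_triangle_ineq3)
      also have "(v + (\<gamma>/2) *\<^sub>R (x - xs)) - (v' + (\<gamma>/2) *\<^sub>R (x' - xs)) = (v - v') + (\<gamma>/2) *\<^sub>R (x - x')"
        by (simp add: algebra_simps)
      also have "norm \<dots> \<le> norm (v - v') + norm ((\<gamma>/2) *\<^sub>R (x - x'))" by (rule norm_triangle_ineq)
      also have "norm ((\<gamma>/2) *\<^sub>R (x - x')) \<le> \<gamma> * norm (x - x')" using g by simp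
      finally have h: "\<bar>n - n'\<bar> \<le> norm (v - v') + \<gamma> * norm (x - x')" by simp
      have "sqrt (1/2) \<le> 1" by simp
      then have k: "sqrt (1/2) * \<bar>n - n'\<bar> \<le> 1 * \<bar>n - n'\<bar>" by (rule mult_right_mono) simp
      show ?thesis by (rule order_trans[OF k[unfolded mult_1_left] h])
    qed
    have b3: "sqrt c * \<bar>Y - Y'\<bar> \<le> \<gamma> * norm (x - x')"
    proof -
      have "\<bar>Y - Y'\<bar> \<le> norm ((x - xs) - (x' - xs))" unfolding Y_def Y'_def by (rule norm_triangle_ineq3)
      then have h: "\<bar>Y - Y'\<bar> \<le> norm (x - x')" by simp
      show ?thesis using mult_mono[OF cg h] g by simp
    qed
    have hab: "\<gamma> * norm (x - x') + norm (v - v') \<le> 2 * \<gamma> * abnorm a b (x - x') (v - v')"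
      using abn_lower[OF g M gm, of "x - x'" "v - v'"] unfolding a_def b_def by simp
    moreover have "0 \<le> \<gamma> * norm (x - x') + norm (v - v')" using g by simp
    moreover have "0 \<le> norm (v - v')" "0 \<le> \<gamma> * norm (x - x')" using g by auto
    ultimately show ?thesis using t b1 b2 b3 by linarith
  qed
  show ?thesis using part1 part2 by blast
qed

end
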